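(* Let $\mathcal{M}=\langle S,\iota,\mathsf{Act},P,\mathsf{Z},\mathsf{obs}\rangle$ be an MDP, $\tau\in\mathsf{Z}^+$ a trace and $r\colon S\to\mathbb{R}_{\ge0}$ a state-risk function. Then $R_r(\tau)=\sup_{\mathsf{bel}\in\mathsf{est}_{\mathsf{MDP}}(\tau)}\sum_{s\in S}\mathsf{bel}(s)\cdot r(s)$.
   Context: An MDP is a tuple $\langle S,\iota,\mathsf{Act},P,\mathsf{Z},\mathsf{obs}\rangle$: finite state set $S$, initial distribution $\iota\in\mathsf{Distr}(S)$, finite action set $\mathsf{Act}$, partial transition function $P\colon S\times\mathsf{Act}\rightharpoonup\mathsf{Distr}(S)$ (write $P(s,\alpha,s')=P(s,\alpha)(s')$), finite observation set $\mathsf{Z}$, observation function $\mathsf{obs}\colon S\to\mathsf{Distr}(\mathsf{Z})$; $\mathsf{AvAct}(s)=\{\alpha\mid P(s,\alpha)\text{ defined}\}\neq\emptyset$. A finite path is $\pi=s_0a_0\dots a_{n-1}s_n$ with $\iota(s_0)>0$, $P(s_i,a_i)(s_{i+1})>0$; $\mathrm{last}(\pi)=s_n$. A scheduler $\sigma$ maps each finite path $\pi$ to a distribution on $\mathsf{AvAct}(\mathrm{last}(\pi))$; $\Sigma$ is the set of schedulers; $\Pr^\sigma(\pi)=\iota(s_0)\prod_{i<n}\sigma(s_0a_0\dots s_i)(a_i)P(s_i,a_i)(s_{i+1})$. For a trace $\tau=z_0\dots z_n\in\mathsf{Z}^+$ and path $\pi=s_0\dots s_m$, $\Pr(\tau\mid\pi)=\prod_{i=0}^n\mathsf{obs}(s_i)(z_i)$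 if $m=n$, else $0$; $\mathrm{Paths}(\tau)$ are the paths with as many states as $\tau$ has observations; $\Pr^\sigma(\tau)=\sum_\pi\Pr^\sigma(\pi)\Pr(\tau\mid\pi)$; $\Pr^\sigma(\pi\mid\tau)=\Pr(\tau\mid\pi)\Pr^\sigma(\pi)/\Pr^\sigma(\tau)$ with $0/0=0$. The weighted risk is $R_r(\tau)=\sup_{\sigma\in\Sigma}\sum_{\pi\in\mathrm{Paths}(\tau)}\Pr^\sigma(\pi\mid\tau)r(\mathrm{last}(\pi))$. Beliefs: $\mathsf{Bel}=\mathsf{Distr}(S)\cup\{\mathbf{0}\}$, $\mathbf{0}$ the zero function on $S$. Define $\mathsf{est}_{\mathsf{MDP}}\colon\mathsf{Z}^+\to2^{\mathsf{Bel}}$ by $\mathsf{est}_{\mathsf{MDP}}(z)=\{b_z\}$ where $b_z(s)=\iota(s)\mathsf{obs}(s)(z)/\sum_{\hat s}\iota(\hat s)\mathsf{obs}(\hat s)(z)$ if some $s$ has $\iota(s)\mathsf{obs}(s)(z)>0$ and $b_z=\mathbf{0}$ otherwise; and $\mathsf{est}_{\mathsf{MDP}}(\tau\cdot z)=\bigcup_{\mathsf{bel}\in\mathsf{est}_{\mathsf{MDP}}(\tau)}\mathsf{est}^{\mathsf{up}}(\mathsf{bel},z)$, where $\mathsf{bel}'\in\mathsf{est}^{\mathsf{up}}(\mathsf{bel},z)$ iff there is $\varsigma\colon S\to\mathsf{Distr}(\mathsf{Act})$ with $\varsigma(s)$ supported in $\mathsf{AvAct}(s)$ such that for all $s'$: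 $\mathsf{bel}'(s')=\dfrac{\sum_s\mathsf{bel}(s)\sum_\alpha\varsigma(s)(\alpha)P(s,\alpha,s')\mathsf{obs}(s')(z)}{\sum_s\mathsf{bel}(s)\sum_\alpha\varsigma(s)(\alpha)\sum_{\hat s}P(s,\alpha,\hat s)\mathsf{obs}(\hat s)(z)}$ (with $0/0=0$). *)

theory Defs
  imports Complex_Main
begin

definition is_distr :: "('x::finite \<Rightarrow> real) \<Rightarrow> bool" where
  "is_distr f \<longleftrightarrow> (\<forall>x. 0 \<le> f x) \<and> (\<Sum>x\<in>UNIV. f x) = 1"

definition AvAct :: "('s \<Rightarrow> 'a \<Rightarrow> ('s \<Rightarrow> real) option) \<Rightarrow> 's \<Rightarrow> 'a set" where
  "AvAct P s = {\<alpha>. P s \<alpha> \<noteq> None}"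

definition Ptr :: "('s \<Rightarrow> 'a \<Rightarrow> ('s \<Rightarrow> real) option) \<Rightarrow> 's \<Rightarrow> 'a \<Rightarrow> 's \<Rightarrow> real" where
  "Ptr P s \<alpha> s' = (case P s \<alpha> of Some d \<Rightarrow> d s' | None \<Rightarrow> 0)"

definition mdp :: "('s::finite \<Rightarrow> real) \<Rightarrow> ('s \<Rightarrow> 'a::finite \<Rightarrow> ('s \<Rightarrow> real) option)
    \<Rightarrow> ('s \<Rightarrow> 'z::finite \<Rightarrow> real) \<Rightarrow> bool" where
  "mdp \<iota> P obs \<longleftrightarrow> is_distr \<iota> \<and> (\<forall>s \<alpha> d. P s \<alpha> = Some d \<longrightarrow> is_distr d)
     \<and> (\<forall>s. is_distr (obs s)) \<and> (\<forall>s. AvAct P s \<noteq> {})"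

text \<open>A finite path s0 a0 s1 ... a(n-1) sn is represented as the pair of its state list
  [s0,...,sn] and its action list [a0,...,a(n-1)].\<close>

definition is_path :: "('s \<Rightarrow> real) \<Rightarrow> ('s \<Rightarrow> 'a \<Rightarrow> ('s \<Rightarrow> real) option)
    \<Rightarrow> 's list \<times> 'a list \<Rightarrow> bool" where
  "is_path \<iota> P \<pi> \<longleftrightarrow> length (fst \<pi>) = Suc (length (snd \<pi>)) \<and> \<iota> (fst \<pi> ! 0) > 0 \<and>
     (\<forall>i < length (snd \<pi>). P (fst \<pi> ! i) (snd \<pi> ! i) \<noteq> None \<and>
        Ptr P (fst \<pi> ! i) (snd \<pi> ! i) (fst \<pi> ! Suc i) > 0)"

definition last_st :: "'s list \<times> 'a list \<Rightarrow> 's" where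
  "last_st \<pi> = last (fst \<pi>)"

definition path_prefix :: "'s list \<times> 'a list \<Rightarrow> nat \<Rightarrow> 's list \<times> 'a list" where
  "path_prefix \<pi> i = (take (Suc i) (fst \<pi>), take i (snd \<pi>))"

text \<open>Schedulers: map every finite path to a distribution over the actions available
  in its last state (values on non-paths are irrelevant).\<close>

definition schedulers :: "('s \<Rightarrow> real) \<Rightarrow> ('s \<Rightarrow> 'a::finite \<Rightarrow> ('s \<Rightarrow> real) option)
    \<Rightarrow> ('s list \<times> 'a list \<Rightarrow> 'a \<Rightarrow> real) set" where
  "schedulers \<iota> P = {\<sigma>. \<forall>\<pi>. is_path \<iota> P \<pi> \<longrightarrow>
      is_distr (\<sigma> \<pi>) \<and> (\<forall>\<alpha>. \<sigma> \<pi> \<alpha> > 0 \<longrightarrow> \<alpha> \<in> AvAct P (last_st \<pi>))}"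

definition Pr_path :: "('s \<Rightarrow> real) \<Rightarrow> ('s \<Rightarrow> 'a \<Rightarrow> ('s \<Rightarrow> real) option)
    \<Rightarrow> ('s list \<times> 'a list \<Rightarrow> 'a \<Rightarrow> real) \<Rightarrow> 's list \<times> 'a list \<Rightarrow> real" where
  "Pr_path \<iota> P \<sigma> \<pi> = \<iota> (fst \<pi> ! 0) *
     (\<Prod>i<length (snd \<pi>). \<sigma> (path_prefix \<pi> i) (snd \<pi> ! i) *
        Ptr P (fst \<pi> ! i) (snd \<pi> ! i) (fst \<pi> ! Suc i))"

definition Pr_obs :: "('s \<Rightarrow> 'z \<Rightarrow> real) \<Rightarrow> 'z list \<Rightarrow> 's list \<times> 'a list \<Rightarrow> real" where
  "Pr_obs obs \<tau> \<pi> = (if length (fst \<pi>) = length \<tau>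
      then (\<Prod>i<length \<tau>. obs (fst \<pi> ! i) (\<tau> ! i)) else 0)"

definition Paths_tr :: "('s \<Rightarrow> real) \<Rightarrow> ('s \<Rightarrow> 'a \<Rightarrow> ('s \<Rightarrow> real) option)
    \<Rightarrow> 'z list \<Rightarrow> ('s list \<times> 'a list) set" where
  "Paths_tr \<iota> P \<tau> = {\<pi>. is_path \<iota> P \<pi> \<and> length (fst \<pi>) = length \<tau>}"

definition Pr_trace :: "('s \<Rightarrow> real) \<Rightarrow> ('s \<Rightarrow> 'a \<Rightarrow> ('s \<Rightarrow> real) option) \<Rightarrow> ('s \<Rightarrow> 'z \<Rightarrow> real)
    \<Rightarrow> ('s list \<times> 'a list \<Rightarrow> 'a \<Rightarrow> real) \<Rightarrow> 'z list \<Rightarrow> real" where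
  "Pr_trace \<iota> P obs \<sigma> \<tau> = (\<Sum>\<pi>\<in>Paths_tr \<iota> P \<tau>. Pr_path \<iota> P \<sigma> \<pi> * Pr_obs obs \<tau> \<pi>)"

definition Pr_cond :: "('s \<Rightarrow> real) \<Rightarrow> ('s \<Rightarrow> 'a \<Rightarrow> ('s \<Rightarrow> real) option) \<Rightarrow> ('s \<Rightarrow> 'z \<Rightarrow> real)
    \<Rightarrow> ('s list \<times> 'a list \<Rightarrow> 'a \<Rightarrow> real) \<Rightarrow> 's list \<times> 'a list \<Rightarrow> 'z list \<Rightarrow> real" where
  "Pr_cond \<iota> P obs \<sigma> \<pi> \<tau> = Pr_obs obs \<tau> \<pi> * Pr_path \<iota> P \<sigma> \<pi> / Pr_trace \<iota> P obs \<sigma> \<tau>"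

definition risk :: "('s \<Rightarrow> real) \<Rightarrow> ('s \<Rightarrow> 'a::finite \<Rightarrow> ('s \<Rightarrow> real) option) \<Rightarrow> ('s \<Rightarrow> 'z \<Rightarrow> real)
    \<Rightarrow> ('s \<Rightarrow> real) \<Rightarrow> 'z list \<Rightarrow> real" where
  "risk \<iota> P obs r \<tau> = (SUP \<sigma>\<in>schedulers \<iota> P.
      \<Sum>\<pi>\<in>Paths_tr \<iota> P \<tau>. Pr_cond \<iota> P obs \<sigma> \<pi> \<tau> * r (last_st \<pi>))"

definition bel_init :: "('s::finite \<Rightarrow> real) \<Rightarrow> ('s \<Rightarrow> 'z \<Rightarrow> real) \<Rightarrow> 'z \<Rightarrow> ('s \<Rightarrow> real)" where
  "bel_init \<iota> obs z = (if \<exists>s. \<iota> s * obs s z > 0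
      then (\<lambda>s. \<iota> s * obs s z / (\<Sum>s'\<in>UNIV. \<iota> s' * obs s' z)) else (\<lambda>_. 0))"

definition est_up :: "('s::finite \<Rightarrow> 'a::finite \<Rightarrow> ('s \<Rightarrow> real) option) \<Rightarrow> ('s \<Rightarrow> 'z \<Rightarrow> real)
    \<Rightarrow> ('s \<Rightarrow> real) \<Rightarrow> 'z \<Rightarrow> ('s \<Rightarrow> real) set" where
  "est_up P obs bel z = {bel'. \<exists>\<zeta> :: 's \<Rightarrow> 'a \<Rightarrow> real.
      (\<forall>s. is_distr (\<zeta> s) \<and> (\<forall>\<alpha>. \<zeta> s \<alpha> > 0 \<longrightarrow> \<alpha> \<in> AvAct P s)) \<and>
      (\<forall>s'. bel' s' =
        (\<Sum>s\<in>UNIV. bel s * (\<Sum>\<alpha>\<in>UNIV. \<zeta> s \<alpha> * Ptr P s \<alpha> s' * obs s' z)) /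
        (\<Sum>s\<in>UNIV. bel s * (\<Sum>\<alpha>\<in>UNIV. \<zeta> s \<alpha> * (\<Sum>t\<in>UNIV. Ptr P s \<alpha> t * obs t z))))}"

text \<open>est_rev works on the reversed trace (last observation first).\<close>
fun est_rev :: "('s::finite \<Rightarrow> real) \<Rightarrow> ('s \<Rightarrow> 'a::finite \<Rightarrow> ('s \<Rightarrow> real) option)
    \<Rightarrow> ('s \<Rightarrow> 'z \<Rightarrow> real) \<Rightarrow> 'z list \<Rightarrow> ('s \<Rightarrow> real) set" where
  "est_rev \<iota> P obs [] = {}"
| "est_rev \<iota> P obs [z] = {bel_init \<iota> obs z}"
| "est_rev \<iota> P obs (z # y # zs) = (\<Union>bel\<in>est_rev \<iota> P obs (y # zs). est_up P obs bel z)"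

definition est_MDP :: "('s::finite \<Rightarrow> real) \<Rightarrow> ('s \<Rightarrow> 'a::finite \<Rightarrow> ('s \<Rightarrow> real) option)
    \<Rightarrow> ('s \<Rightarrow> 'z \<Rightarrow> real) \<Rightarrow> 'z list \<Rightarrow> ('s \<Rightarrow> real) set" where
  "est_MDP \<iota> P obs \<tau> = est_rev \<iota> P obs (rev \<tau>)"

end

theory Submission
  imports Defs
begin

definition Ln :: "nat \<Rightarrow> ('s list \<times> 'a list) set" where
  "Ln n = {\<pi>. length (fst \<pi>) = Suc n \<and> length (snd \<pi>) = n}"

lemma finite_Ln: "finite (Ln n :: ('s::finite list \<times> 'a::finite list) set)"
proof -
  have "Ln n = {ss::'s list. set ss \<subseteq> UNIV \<and> length ss = Suc n} \<times> {as::'a list. set as \<subseteq> UNIV \<and> length as = n}"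
    unfolding Ln_def by auto
  then show ?thesis using finite_lists_length_eq[of "UNIV::'s set"] finite_lists_length_eq[of "UNIV::'a set"]
    by simp
qed

lemma sum_pair: "(\<Sum>y\<in>A \<times> B. g (fst y) (snd y)) = (\<Sum>a\<in>A. \<Sum>b\<in>B. g a b)"
  by (simp add: sum.cartesian_product split_def)

lemma sum_Ln_Suc:
  fixes f :: "'s::finite list \<times> 'a::finite list \<Rightarrow> real"
  shows "(\<Sum>\<pi>\<in>Ln (Suc n). f \<pi>) = (\<Sum>\<pi>\<in>Ln n. \<Sum>\<alpha>\<in>UNIV. \<Sum>t\<in>UNIV. f (fst \<pi> @ [t], snd \<pi> @ [\<alpha>]))"
proof -
  let ?g = "\<lambda>(\<pi>::'s list \<times> 'a list, \<alpha>::'a, t::'s). (fst \<pi> @ [t], snd \<pi> @ [\<alpha>])"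
  have img: "Ln (Suc n) = ?g ` (Ln n \<times> UNIV \<times> UNIV)"
  proof
    show "?g ` (Ln n \<times> UNIV \<times> UNIV) \<subseteq> Ln (Suc n)" by (auto simp: Ln_def)
    show "Ln (Suc n) \<subseteq> ?g ` (Ln n \<times> UNIV \<times> UNIV)"
    proof
      fix x :: "'s list \<times> 'a list" assume x: "x \<in> Ln (Suc n)"
      obtain ss as where xe: "x = (ss, as)" by (cases x)
      have l: "length ss = Suc (Suc n)" "length as = Suc n" using x xe by (auto simp: Ln_def)
      then have ne: "ss \<noteq> []" "as \<noteq> []" by auto
      have "x = ?g ((butlast ss, butlast as), last as, last ss)"
        using xe ne by (simp add: append_butlast_last_id)
      moreover have "((butlast ss, butlast as), last as, last ss) \<in> Ln n \<times> UNIV \<times> UNIV"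
        using l by (simp add: Ln_def)
      ultimately show "x \<in> ?g ` (Ln n \<times> UNIV \<times> UNIV)" by blast
    qed
  qed
  have inj: "inj_on ?g (Ln n \<times> UNIV \<times> UNIV)"
    by (auto simp: inj_on_def prod_eq_iff)
  have "(\<Sum>\<pi>\<in>Ln (Suc n). f \<pi>) = (\<Sum>x\<in>Ln n \<times> UNIV \<times> UNIV. f (?g x))"
    by (simp only: img sum.reindex[OF inj] comp_def)
  also have "\<dots> = (\<Sum>\<pi>\<in>Ln n. \<Sum>y\<in>UNIV \<times> UNIV. f (?g (\<pi>, y)))"
    by (simp only: sum.cartesian_product split_def fst_conv snd_conv)
  also have "\<dots> = (\<Sum>\<pi>\<in>Ln n. \<Sum>\<alpha>\<in>UNIV. \<Sum>t\<in>UNIV. f (fst \<pi> @ [t], snd \<pi> @ [\<alpha>]))"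
    by (simp only: split_def fst_conv snd_conv) (rule sum.cong[OF refl], rule sum_pair[where g="\<lambda>\<alpha> t. f (fst _ @ [t], snd _ @ [\<alpha>])"])
  finally show ?thesis .
qed

lemma Ln0: "Ln 0 = (\<lambda>s. ([s], [])) ` UNIV"
  unfolding Ln_def by (auto simp: length_Suc_conv image_def)

lemma Pr_path_snoc:
  assumes "length ss = Suc n" "length as = n"
  shows "Pr_path \<iota> P \<sigma> (ss @ [t], as @ [\<alpha>]) = Pr_path \<iota> P \<sigma> (ss, as) * (\<sigma> (ss, as) \<alpha> * Ptr P (last ss) \<alpha> t)"
proof -
  have ne: "ss \<noteq> []" using assms by auto
  have pp: "path_prefix (ss @ [t], as @ [\<alpha>]) i = path_prefix (ss, as) i" if "i < n" for i
    using that assms by (simp add: path_prefix_def)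
  have pn: "path_prefix (ss @ [t], as @ [\<alpha>]) n = (ss, as)"
    using assms by (simp add: path_prefix_def)
  have lastn: "ss ! n = last ss" using assms ne by (simp add: last_conv_nth)
  have pr: "(\<Prod>i<n. \<sigma> (path_prefix (ss @ [t], as @ [\<alpha>]) i) ((as @ [\<alpha>]) ! i) *
        Ptr P ((ss @ [t]) ! i) ((as @ [\<alpha>]) ! i) ((ss @ [t]) ! Suc i)) =
     (\<Prod>i<n. \<sigma> (path_prefix (ss, as) i) (as ! i) * Ptr P (ss ! i) (as ! i) (ss ! Suc i))"
    by (rule prod.cong, simp) (use assms in \<open>simp add: pp nth_append\<close>)
  show ?thesis
    unfolding Pr_path_def using assms ne pr
    by (simp add: prod.lessThan_Suc nth_append pn lastn)
qed

lemma Pr_obs_snoc: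
  assumes "length ss = length \<tau>"
  shows "Pr_obs obs (\<tau> @ [z]) (ss @ [t], as') = Pr_obs obs \<tau> (ss, as) * obs t z"
  using assms unfolding Pr_obs_def
  by (simp add: prod.lessThan_Suc nth_append)


definition Wt where "Wt \<iota> P obs \<sigma> \<tau> \<pi> = Pr_path \<iota> P \<sigma> \<pi> * Pr_obs obs \<tau> \<pi>"

definition uvec where "uvec \<iota> P obs \<sigma> \<tau> s =
  (\<Sum>\<pi>\<in>Ln (length \<tau> - 1). if last (fst \<pi>) = s then Wt \<iota> P obs \<sigma> \<tau> \<pi> else 0)"

definition Mv where "Mv \<iota> P obs \<sigma> \<tau> s \<alpha> =
  (\<Sum>\<pi>\<in>Ln (length \<tau> - 1). if last (fst \<pi>) = s then Wt \<iota> P obs \<sigma> \<tau> \<pi> * \<sigma> \<pi> \<alpha> else 0)"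

definition nrm :: "('s::finite \<Rightarrow> real) \<Rightarrow> 's \<Rightarrow> real" where
  "nrm u = (\<lambda>s. u s / (\<Sum>t\<in>UNIV. u t))"

definition valid_sc where "valid_sc P \<zeta> \<longleftrightarrow> (\<forall>s. is_distr (\<zeta> s) \<and> (\<forall>\<alpha>. \<zeta> s \<alpha> > 0 \<longrightarrow> \<alpha> \<in> AvAct P s))"

definition stp where "stp P obs \<zeta> z u =
  (\<lambda>s'. \<Sum>s\<in>UNIV. u s * (\<Sum>\<alpha>\<in>UNIV. \<zeta> s \<alpha> * Ptr P s \<alpha> s' * obs s' z))"

lemma den_eq:
  fixes P :: "'s::finite \<Rightarrow> 'a::finite \<Rightarrow> ('s \<Rightarrow> real) option"
  shows "(\<Sum>t\<in>UNIV. stp P obs \<zeta> z bel t) =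
     (\<Sum>s\<in>UNIV. bel s * (\<Sum>\<alpha>\<in>UNIV. \<zeta> s \<alpha> * (\<Sum>t\<in>UNIV. Ptr P s \<alpha> t * obs t z)))"
proof -
  have "(\<Sum>t\<in>UNIV. stp P obs \<zeta> z bel t) =
     (\<Sum>s\<in>UNIV. \<Sum>t\<in>UNIV. bel s * (\<Sum>\<alpha>\<in>UNIV. \<zeta> s \<alpha> * Ptr P s \<alpha> t * obs t z))"
    unfolding stp_def by (rule sum.swap)
  also have "\<dots> = (\<Sum>s\<in>UNIV. bel s * (\<Sum>t\<in>UNIV. \<Sum>\<alpha>\<in>UNIV. \<zeta> s \<alpha> * Ptr P s \<alpha> t * obs t z))"
    by (simp add: sum_distrib_left)
  also have "\<dots> = (\<Sum>s\<in>UNIV. bel s * (\<Sum>\<alpha>\<in>UNIV. \<Sum>t\<in>UNIV. \<zeta> s \<alpha> * Ptr P s \<alpha> t * obs t z))"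
    by (subst sum.swap) (rule refl)
  also have "\<dots> = (\<Sum>s\<in>UNIV. bel s * (\<Sum>\<alpha>\<in>UNIV. \<zeta> s \<alpha> * (\<Sum>t\<in>UNIV. Ptr P s \<alpha> t * obs t z)))"
    by (simp add: sum_distrib_left mult.assoc)
  finally show ?thesis .
qed

lemma est_up_char:
  fixes P :: "'s::finite \<Rightarrow> 'a::finite \<Rightarrow> ('s \<Rightarrow> real) option"
  shows "est_up P obs bel z = {nrm (stp P obs \<zeta> z bel) | \<zeta>. valid_sc P \<zeta>}"
  unfolding est_up_def valid_sc_def nrm_def den_eq[symmetric]
  unfolding stp_def[of P obs _ z bel] fun_eq_iff[symmetric]
  by blast

lemma nrm_stp:
  assumes "\<forall>s. 0 \<le> u s"
  shows "nrm (stp P obs \<zeta> z (nrm u)) = nrm (stp P obs \<zeta> z u)"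
proof (cases "(\<Sum>t\<in>UNIV. u t) = 0")
  case True
  then have "u = (\<lambda>_. 0)" using assms sum_nonneg_eq_0_iff[of UNIV u] by auto
  then show ?thesis by (simp add: nrm_def stp_def)
next
  case False
  let ?c = "\<Sum>t\<in>UNIV. u t"
  have "stp P obs \<zeta> z (nrm u) = (\<lambda>s'. stp P obs \<zeta> z u s' / ?c)"
    unfolding stp_def nrm_def by (simp add: sum_divide_distrib)
  then show ?thesis using False
    by (simp add: nrm_def sum_divide_distrib[symmetric])
qed

context
  fixes \<iota> :: "'s::finite \<Rightarrow> real"
    and P :: "'s \<Rightarrow> 'a::finite \<Rightarrow> ('s \<Rightarrow> real) option"
    and obs :: "'s \<Rightarrow> 'z::finite \<Rightarrow> real"
  assumes M: "mdp \<iota> P obs"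
begin

lemma iota_nonneg: "0 \<le> \<iota> s" using M by (simp add: mdp_def is_distr_def)
lemma obs_nonneg: "0 \<le> obs s z" using M by (simp add: mdp_def is_distr_def)
lemma Ptr_nonneg: "0 \<le> Ptr P s \<alpha> t"
  using M by (auto simp: mdp_def is_distr_def Ptr_def split: option.split)

lemma Pr_obs_nonneg: "0 \<le> Pr_obs obs \<tau> \<pi>"
  unfolding Pr_obs_def by (auto intro!: prod_nonneg obs_nonneg)

lemma Pr_path_nz_path:
  assumes "\<pi> \<in> Ln n" "Pr_path \<iota> P \<sigma> \<pi> \<noteq> 0"
  shows "is_path \<iota> P \<pi>"
proof -
  have i0: "\<iota> (fst \<pi> ! 0) \<noteq> 0" and f: "\<forall>i < length (snd \<pi>). Ptr P (fst \<pi> ! i) (snd \<pi> ! i) (fst \<pi> ! Suc i) \<noteq> 0"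
    using assms(2) unfolding Pr_path_def by auto
  have "P (fst \<pi> ! i) (snd \<pi> ! i) \<noteq> None" if "i < length (snd \<pi>)" for i
    using f that by (auto simp: Ptr_def split: option.splits)
  moreover have "Ptr P (fst \<pi> ! i) (snd \<pi> ! i) (fst \<pi> ! Suc i) > 0" if "i < length (snd \<pi>)" for i
    using f that Ptr_nonneg by (simp add: order_less_le)
  moreover have "\<iota> (fst \<pi> ! 0) > 0" using i0 iota_nonneg by (simp add: order_less_le)
  ultimately show ?thesis using assms(1) unfolding is_path_def Ln_def by auto
qed

lemma prefix_path:
  assumes "is_path \<iota> P \<pi>" "i < length (snd \<pi>)"
  shows "is_path \<iota> P (path_prefix \<pi> i)"
  using assms unfolding is_path_def path_prefix_def by auto

lemma schedD:
  assumes "\<sigma> \<in> schedulers \<iota> P" "is_path \<iota> P \<pi>"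
  shows "is_distr (\<sigma> \<pi>)" "\<sigma> \<pi> \<alpha> > 0 \<Longrightarrow> \<alpha> \<in> AvAct P (last_st \<pi>)" "0 \<le> \<sigma> \<pi> \<alpha>"
  using assms unfolding schedulers_def is_distr_def by blast+

lemma Pr_path_nonneg:
  assumes "\<sigma> \<in> schedulers \<iota> P" "\<pi> \<in> Ln n"
  shows "0 \<le> Pr_path \<iota> P \<sigma> \<pi>"
proof (cases "Pr_path \<iota> P \<sigma> \<pi> = 0")
  case False
  then have p: "is_path \<iota> P \<pi>" using Pr_path_nz_path assms(2) by blast
  have "0 \<le> \<sigma> (path_prefix \<pi> i) \<alpha>" if "i < length (snd \<pi>)" for i \<alpha>
    using schedD(3)[OF assms(1) prefix_path[OF p that]] .
  then show ?thesis unfolding Pr_path_def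
    by (auto intro!: mult_nonneg_nonneg prod_nonneg iota_nonneg Ptr_nonneg)
qed simp

lemma Wt_nonneg: "\<sigma> \<in> schedulers \<iota> P \<Longrightarrow> \<pi> \<in> Ln n \<Longrightarrow> 0 \<le> Wt \<iota> P obs \<sigma> \<tau> \<pi>"
  unfolding Wt_def by (intro mult_nonneg_nonneg Pr_path_nonneg Pr_obs_nonneg)

lemma Wt_sigma_nonneg:
  assumes "\<sigma> \<in> schedulers \<iota> P" "\<pi> \<in> Ln n"
  shows "0 \<le> Wt \<iota> P obs \<sigma> \<tau> \<pi> * \<sigma> \<pi> \<alpha>"
proof (cases "Pr_path \<iota> P \<sigma> \<pi> = 0")
  case False
  then have p: "is_path \<iota> P \<pi>" using Pr_path_nz_path assms(2) by blast
  then have "0 \<le> \<sigma> \<pi> \<alpha>" using schedD(3)[OF assms(1)] by blast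
  then show ?thesis using Wt_nonneg[OF assms] by simp
qed (simp add: Wt_def)

lemma uvec_nonneg: "\<sigma> \<in> schedulers \<iota> P \<Longrightarrow> 0 \<le> uvec \<iota> P obs \<sigma> \<tau> s"
  unfolding uvec_def by (auto intro!: sum_nonneg Wt_nonneg)

lemma uvec_base: "uvec \<iota> P obs \<sigma> [z] s = \<iota> s * obs s z"
proof -
  have inj: "inj (\<lambda>s::'s. ([s], []::'a list))" by (auto simp: inj_def)
  have "uvec \<iota> P obs \<sigma> [z] s = (\<Sum>s0\<in>UNIV. if s0 = s then Wt \<iota> P obs \<sigma> [z] ([s0], []) else 0)"
    unfolding uvec_def by (simp add: Ln0 sum.reindex[OF inj])
  also have "\<dots> = Wt \<iota> P obs \<sigma> [z] ([s], [])" by simp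
  also have "\<dots> = \<iota> s * obs s z" by (simp add: Wt_def Pr_path_def Pr_obs_def)
  finally show ?thesis .
qed

lemma nrm_base: "nrm (uvec \<iota> P obs \<sigma> [z]) = bel_init \<iota> obs z"
proof (cases "\<exists>s. \<iota> s * obs s z > 0")
  case True
  then show ?thesis by (simp add: nrm_def bel_init_def uvec_base)
next
  case False
  then have z0: "\<iota> s * obs s z = 0" for s
    using mult_nonneg_nonneg[OF iota_nonneg obs_nonneg, of s s z] by (meson order.antisym not_less)
  show ?thesis using False unfolding nrm_def bel_init_def uvec_base z0 by simp
qed

lemma uvec_snoc:
  assumes "\<tau> \<noteq> []"
  shows "uvec \<iota> P obs \<sigma> (\<tau> @ [z]) s' =
    (\<Sum>s\<in>UNIV. \<Sum>\<alpha>\<in>UNIV. Mv \<iota> P obs \<sigma> \<tau> s \<alpha> * Ptr P s \<alpha> s' * obs s' z)"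
proof -
  define n where "n = length \<tau> - 1"
  have ln: "length (\<tau> @ [z]) - 1 = Suc n" "length \<tau> - 1 = n" using assms by (auto simp: n_def)
  have lt: "length \<tau> = Suc n" using assms by (auto simp: n_def)
  have "uvec \<iota> P obs \<sigma> (\<tau> @ [z]) s' = (\<Sum>\<pi>\<in>Ln n. \<Sum>\<alpha>\<in>UNIV. Wt \<iota> P obs \<sigma> (\<tau> @ [z]) (fst \<pi> @ [s'], snd \<pi> @ [\<alpha>]))"
    unfolding uvec_def ln sum_Ln_Suc by simp
  also have "\<dots> = (\<Sum>\<pi>\<in>Ln n. \<Sum>\<alpha>\<in>UNIV. Wt \<iota> P obs \<sigma> \<tau> \<pi> * \<sigma> \<pi> \<alpha> * Ptr P (last (fst \<pi>)) \<alpha> s' * obs s' z)"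
  proof (rule sum.cong[OF refl], rule sum.cong[OF refl])
    fix \<pi> :: "'s list \<times> 'a list" and \<alpha>
    assume "\<pi> \<in> Ln n"
    then have l: "length (fst \<pi>) = Suc n" "length (snd \<pi>) = n" by (auto simp: Ln_def)
    show "Wt \<iota> P obs \<sigma> (\<tau> @ [z]) (fst \<pi> @ [s'], snd \<pi> @ [\<alpha>]) =
        Wt \<iota> P obs \<sigma> \<tau> \<pi> * \<sigma> \<pi> \<alpha> * Ptr P (last (fst \<pi>)) \<alpha> s' * obs s' z"
      unfolding Wt_def Pr_path_snoc[OF l] Pr_obs_snoc[of "fst \<pi>" \<tau> obs z s' "snd \<pi> @ [\<alpha>]" "snd \<pi>", OF l(1)[folded lt]]
      by simp
  qed
  also have "\<dots> = (\<Sum>\<pi>\<in>Ln n. \<Sum>\<alpha>\<in>UNIV. \<Sum>s\<in>UNIV. if last (fst \<pi>) = s then Wt \<iota> P obs \<sigma> \<tau> \<pi> * \<sigma> \<pi> \<alpha> * Ptr P s \<alpha> s' * obs s' z else 0)"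
    by simp
  also have "\<dots> = (\<Sum>\<alpha>\<in>UNIV. \<Sum>s\<in>UNIV. \<Sum>\<pi>\<in>Ln n. if last (fst \<pi>) = s then Wt \<iota> P obs \<sigma> \<tau> \<pi> * \<sigma> \<pi> \<alpha> * Ptr P s \<alpha> s' * obs s' z else 0)"
    by (subst sum.swap) (simp add: sum.swap[of _ UNIV "Ln n"])
  also have "\<dots> = (\<Sum>s\<in>UNIV. \<Sum>\<alpha>\<in>UNIV. \<Sum>\<pi>\<in>Ln n. if last (fst \<pi>) = s then Wt \<iota> P obs \<sigma> \<tau> \<pi> * \<sigma> \<pi> \<alpha> * Ptr P s \<alpha> s' * obs s' z else 0)"
    by (rule sum.swap)
  also have "\<dots> = (\<Sum>s\<in>UNIV. \<Sum>\<alpha>\<in>UNIV. Mv \<iota> P obs \<sigma> \<tau> s \<alpha> * Ptr P s \<alpha> s' * obs s' z)"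
    unfolding Mv_def ln sum_distrib_right by (intro sum.cong refl) (simp add: mult.assoc)
  finally show ?thesis .
qed

lemma uvec_snoc_stp:
  assumes "\<tau> \<noteq> []" "\<forall>s \<alpha>. Mv \<iota> P obs \<sigma> \<tau> s \<alpha> = uvec \<iota> P obs \<sigma> \<tau> s * \<zeta> s \<alpha>"
  shows "uvec \<iota> P obs \<sigma> (\<tau> @ [z]) = stp P obs \<zeta> z (uvec \<iota> P obs \<sigma> \<tau>)"
  unfolding fun_eq_iff uvec_snoc[OF assms(1)] stp_def
  by (simp add: assms(2) sum_distrib_left mult.assoc)

lemma Mv_sum:
  assumes "\<sigma> \<in> schedulers \<iota> P"
  shows "(\<Sum>\<alpha>\<in>UNIV. Mv \<iota> P obs \<sigma> \<tau> s \<alpha>) = uvec \<iota> P obs \<sigma> \<tau> s"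
proof -
  have "(\<Sum>\<alpha>\<in>UNIV. Mv \<iota> P obs \<sigma> \<tau> s \<alpha>) =
     (\<Sum>\<pi>\<in>Ln (length \<tau> - 1). \<Sum>\<alpha>\<in>UNIV. if last (fst \<pi>) = s then Wt \<iota> P obs \<sigma> \<tau> \<pi> * \<sigma> \<pi> \<alpha> else 0)"
    unfolding Mv_def by (rule sum.swap)
  also have "\<dots> = uvec \<iota> P obs \<sigma> \<tau> s"
    unfolding uvec_def
  proof (rule sum.cong[OF refl])
    fix \<pi> :: "'s list \<times> 'a list" assume \<pi>: "\<pi> \<in> Ln (length \<tau> - 1)"
    have "Wt \<iota> P obs \<sigma> \<tau> \<pi> * (\<Sum>\<alpha>\<in>UNIV. \<sigma> \<pi> \<alpha>) = Wt \<iota> P obs \<sigma> \<tau> \<pi>"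
    proof (cases "Pr_path \<iota> P \<sigma> \<pi> = 0")
      case False
      then have "is_path \<iota> P \<pi>" using Pr_path_nz_path \<pi> by blast
      then show ?thesis using schedD(1)[OF assms] by (simp add: is_distr_def)
    qed (simp add: Wt_def)
    then show "(\<Sum>\<alpha>\<in>UNIV. if last (fst \<pi>) = s then Wt \<iota> P obs \<sigma> \<tau> \<pi> * \<sigma> \<pi> \<alpha> else 0) =
        (if last (fst \<pi>) = s then Wt \<iota> P obs \<sigma> \<tau> \<pi> else 0)"
      by (simp add: sum_distrib_left)
  qed
  finally show ?thesis .
qed

lemma Mv_nonneg: "\<sigma> \<in> schedulers \<iota> P \<Longrightarrow> 0 \<le> Mv \<iota> P obs \<sigma> \<tau> s \<alpha>"
  unfolding Mv_def by (auto intro!: sum_nonneg Wt_sigma_nonneg)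

lemma AvAct_ne: "\<exists>\<alpha>. \<alpha> \<in> AvAct P s"
  using M by (auto simp: mdp_def)

lemma exists_sc:
  assumes S: "\<sigma> \<in> schedulers \<iota> P"
  shows "\<exists>\<zeta>. valid_sc P \<zeta> \<and> (\<forall>s \<alpha>. Mv \<iota> P obs \<sigma> \<tau> s \<alpha> = uvec \<iota> P obs \<sigma> \<tau> s * \<zeta> s \<alpha>)"
proof -
  let ?u = "uvec \<iota> P obs \<sigma> \<tau>"
  let ?M = "Mv \<iota> P obs \<sigma> \<tau>"
  define a0 where "a0 s = (SOME \<alpha>. \<alpha> \<in> AvAct P s)" for s
  have a0: "a0 s \<in> AvAct P s" for s unfolding a0_def using AvAct_ne by (rule someI_ex)
  define \<zeta> where "\<zeta> s \<alpha> = (if ?u s = 0 then (if \<alpha> = a0 s then 1 else 0) else ?M s \<alpha> / ?u s)" for s \<alpha>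
  have Mle: "?M s \<alpha> \<le> ?u s" for s \<alpha>
    unfolding Mv_sum[OF S, symmetric, of \<tau> s]
    by (rule member_le_sum) (auto intro: Mv_nonneg[OF S])
  have valid: "valid_sc P \<zeta>"
    unfolding valid_sc_def
  proof (intro allI conjI impI)
    fix s
    show "is_distr (\<zeta> s)"
    proof (cases "?u s = 0")
      case True
      then show ?thesis unfolding is_distr_def \<zeta>_def by simp
    next
      case False
      then have "?u s > 0" using uvec_nonneg[OF S, of \<tau> s] by simp
      then show ?thesis unfolding is_distr_def \<zeta>_def using False Mv_nonneg[OF S]
        by (simp add: sum_divide_distrib[symmetric] Mv_sum[OF S])
    qed
  next
    fix s \<alpha> assume pos: "0 < \<zeta> s \<alpha>"
    show "\<alpha> \<in> AvAct P s"
    proof -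
      show "\<alpha> \<in> AvAct P s"
      proof (cases "?u s = 0")
        case True
        then show ?thesis using pos a0 unfolding \<zeta>_def by (auto split: if_splits)
      next
        case False
        then have "?u s > 0" using uvec_nonneg[OF S, of \<tau> s] by simp
        then have "?M s \<alpha> > 0" using pos False unfolding \<zeta>_def by (simp add: zero_less_divide_iff)
        then obtain \<pi> where \<pi>: "\<pi> \<in> Ln (length \<tau> - 1)"
          and t: "0 < (if last (fst \<pi>) = s then Wt \<iota> P obs \<sigma> \<tau> \<pi> * \<sigma> \<pi> \<alpha> else 0)"
          unfolding Mv_def by (metis (no_types, lifting) not_less sum_nonpos)
        then have ls: "last (fst \<pi>) = s" and wp: "0 < Wt \<iota> P obs \<sigma> \<tau> \<pi> * \<sigma> \<pi> \<alpha>"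
          by (auto split: if_splits)
        have "Pr_path \<iota> P \<sigma> \<pi> \<noteq> 0" using wp by (auto simp: Wt_def)
        then have p: "is_path \<iota> P \<pi>" using Pr_path_nz_path \<pi> by blast
        have "0 < \<sigma> \<pi> \<alpha>" using wp Wt_nonneg[OF S \<pi>, of \<tau>]
          by (simp add: zero_less_mult_iff)
        then show ?thesis using schedD(2)[OF S p] ls by (simp add: last_st_def)
      qed
    qed
  qed
  have "?M s \<alpha> = ?u s * \<zeta> s \<alpha>" for s \<alpha>
  proof (cases "?u s = 0")
    case True
    then show ?thesis using Mle[of s \<alpha>] Mv_nonneg[OF S, of \<tau> s \<alpha>] by simp
  qed (simp add: \<zeta>_def)
  then show ?thesis using valid by blast
qed

lemma Wt_cong:
  assumes "\<forall>\<pi>. length (snd \<pi>) < n \<longrightarrow> \<sigma>' \<pi> = \<sigma> \<pi>" "\<pi> \<in> Ln n"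
  shows "Wt \<iota> P obs \<sigma>' \<tau> \<pi> = Wt \<iota> P obs \<sigma> \<tau> \<pi>"
proof -
  have "length (snd \<pi>) = n" using assms(2) by (simp add: Ln_def)
  then have "Pr_path \<iota> P \<sigma>' \<pi> = Pr_path \<iota> P \<sigma> \<pi>"
    unfolding Pr_path_def using assms(1) by (auto intro!: prod.cong simp: path_prefix_def)
  then show ?thesis by (simp add: Wt_def)
qed

lemma sum_Ln_last:
  "(\<Sum>\<pi>\<in>Ln n. Wt \<iota> P obs \<sigma> \<tau> \<pi> * h (last (fst \<pi>))) =
   (\<Sum>s\<in>UNIV. (\<Sum>\<pi>\<in>Ln n. if last (fst \<pi>) = s then Wt \<iota> P obs \<sigma> \<tau> \<pi> else 0) * h s)"
proof -
  have "(\<Sum>s\<in>UNIV. (\<Sum>\<pi>\<in>Ln n. if last (fst \<pi>) = s then Wt \<iota> P obs \<sigma> \<tau> \<pi> else 0) * h s) =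
     (\<Sum>s\<in>UNIV. \<Sum>\<pi>\<in>Ln n. if last (fst \<pi>) = s then Wt \<iota> P obs \<sigma> \<tau> \<pi> * h s else 0)"
    unfolding sum_distrib_right by (intro sum.cong refl) simp
  also have "\<dots> = (\<Sum>\<pi>\<in>Ln n. \<Sum>s\<in>UNIV. if last (fst \<pi>) = s then Wt \<iota> P obs \<sigma> \<tau> \<pi> * h s else 0)"
    by (rule sum.swap)
  also have "\<dots> = (\<Sum>\<pi>\<in>Ln n. Wt \<iota> P obs \<sigma> \<tau> \<pi> * h (last (fst \<pi>)))"
    by simp
  finally show ?thesis by simp
qed

lemma sum_Paths_Ln:
  assumes "length \<tau> = Suc n"
  shows "(\<Sum>\<pi>\<in>Paths_tr \<iota> P \<tau>. Wt \<iota> P obs \<sigma> \<tau> \<pi> * h \<pi>) = (\<Sum>\<pi>\<in>Ln n. Wt \<iota> P obs \<sigma> \<tau> \<pi> * h \<pi>)"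
proof (rule sum.mono_neutral_left[OF finite_Ln])
  show "Paths_tr \<iota> P \<tau> \<subseteq> Ln n"
    using assms by (auto simp: Paths_tr_def Ln_def is_path_def)
  show "\<forall>\<pi>\<in>Ln n - Paths_tr \<iota> P \<tau>. Wt \<iota> P obs \<sigma> \<tau> \<pi> * h \<pi> = 0"
  proof
    fix \<pi> assume "\<pi> \<in> Ln n - Paths_tr \<iota> P \<tau>"
    then have "\<pi> \<in> Ln n" "\<not> is_path \<iota> P \<pi>" using assms by (auto simp: Paths_tr_def Ln_def)
    then have "Pr_path \<iota> P \<sigma> \<pi> = 0" using Pr_path_nz_path by blast
    then show "Wt \<iota> P obs \<sigma> \<tau> \<pi> * h \<pi> = 0" by (simp add: Wt_def)
  qed
qed

lemma value_eq:
  assumes "\<tau> \<noteq> []"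
  shows "(\<Sum>\<pi>\<in>Paths_tr \<iota> P \<tau>. Pr_cond \<iota> P obs \<sigma> \<pi> \<tau> * r (last_st \<pi>)) =
    (\<Sum>s\<in>UNIV. nrm (uvec \<iota> P obs \<sigma> \<tau>) s * r s)"
proof -
  define n where "n = length \<tau> - 1"
  have lt: "length \<tau> = Suc n" using assms by (auto simp: n_def)
  have T: "Pr_trace \<iota> P obs \<sigma> \<tau> = (\<Sum>s\<in>UNIV. uvec \<iota> P obs \<sigma> \<tau> s)"
  proof -
    have "Pr_trace \<iota> P obs \<sigma> \<tau> = (\<Sum>\<pi>\<in>Paths_tr \<iota> P \<tau>. Wt \<iota> P obs \<sigma> \<tau> \<pi> * (\<lambda>_. 1) \<pi>)"
      by (simp add: Pr_trace_def Wt_def)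
    also have "\<dots> = (\<Sum>\<pi>\<in>Ln n. Wt \<iota> P obs \<sigma> \<tau> \<pi> * (\<lambda>_. 1) (last (fst \<pi>)))"
      by (simp only: sum_Paths_Ln[OF lt])
    also have "\<dots> = (\<Sum>s\<in>UNIV. uvec \<iota> P obs \<sigma> \<tau> s)"
      using sum_Ln_last[where n=n and \<sigma>=\<sigma> and \<tau>=\<tau> and h="\<lambda>_. 1"] unfolding uvec_def n_def by simp
    finally show ?thesis .
  qed
  have "(\<Sum>\<pi>\<in>Paths_tr \<iota> P \<tau>. Pr_cond \<iota> P obs \<sigma> \<pi> \<tau> * r (last_st \<pi>)) =
    (\<Sum>\<pi>\<in>Paths_tr \<iota> P \<tau>. Wt \<iota> P obs \<sigma> \<tau> \<pi> * r (last (fst \<pi>))) / Pr_trace \<iota> P obs \<sigma> \<tau>"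
    by (simp add: Pr_cond_def Wt_def last_st_def sum_divide_distrib mult.commute)
  also have "\<dots> = (\<Sum>\<pi>\<in>Ln n. Wt \<iota> P obs \<sigma> \<tau> \<pi> * r (last (fst \<pi>))) / Pr_trace \<iota> P obs \<sigma> \<tau>"
    by (simp only: sum_Paths_Ln[OF lt])
  also have "\<dots> = (\<Sum>s\<in>UNIV. uvec \<iota> P obs \<sigma> \<tau> s * r s) / (\<Sum>s\<in>UNIV. uvec \<iota> P obs \<sigma> \<tau> s)"
    unfolding sum_Ln_last T uvec_def n_def by simp
  also have "\<dots> = (\<Sum>s\<in>UNIV. nrm (uvec \<iota> P obs \<sigma> \<tau>) s * r s)"
    by (simp add: nrm_def sum_divide_distrib)
  finally show ?thesis .
qed

lemma est_snoc:
  assumes "\<tau> \<noteq> []"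
  shows "est_MDP \<iota> P obs (\<tau> @ [z]) = (\<Union>bel\<in>est_MDP \<iota> P obs \<tau>. est_up P obs bel z)"
proof -
  obtain y zs where "rev \<tau> = y # zs" using assms by (cases "rev \<tau>") auto
  then show ?thesis unfolding est_MDP_def by simp
qed

lemma est_single: "est_MDP \<iota> P obs [z] = {bel_init \<iota> obs z}"
  unfolding est_MDP_def by simp

lemma mainA:
  assumes S: "\<sigma> \<in> schedulers \<iota> P"
  shows "\<tau> \<noteq> [] \<Longrightarrow> nrm (uvec \<iota> P obs \<sigma> \<tau>) \<in> est_MDP \<iota> P obs \<tau>"
proof (induction \<tau> rule: rev_induct)
  case (snoc z \<tau>)
  show ?case
  proof (cases "\<tau> = []")
    case True
    then show ?thesis by (simp add: est_single nrm_base)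
  next
    case False
    obtain \<zeta> where v: "valid_sc P \<zeta>" and f: "\<forall>s \<alpha>. Mv \<iota> P obs \<sigma> \<tau> s \<alpha> = uvec \<iota> P obs \<sigma> \<tau> s * \<zeta> s \<alpha>"
      using exists_sc[OF S] by blast
    have "nrm (uvec \<iota> P obs \<sigma> (\<tau> @ [z])) = nrm (stp P obs \<zeta> z (nrm (uvec \<iota> P obs \<sigma> \<tau>)))"
      unfolding uvec_snoc_stp[OF False f] using uvec_nonneg[OF S] by (simp add: nrm_stp)
    also have "\<dots> \<in> est_up P obs (nrm (uvec \<iota> P obs \<sigma> \<tau>)) z"
      unfolding est_up_char using v by blast
    finally show ?thesis using snoc.IH[OF False] est_snoc[OF False] by blast
  qed
qed simp

lemma sched_ne: "\<exists>\<sigma>. \<sigma> \<in> schedulers \<iota> P"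
proof -
  define a0 where "a0 s = (SOME \<alpha>. \<alpha> \<in> AvAct P s)" for s
  have a0: "a0 s \<in> AvAct P s" for s unfolding a0_def using AvAct_ne by (rule someI_ex)
  let ?\<sigma> = "\<lambda>\<pi> \<alpha>. if \<alpha> = a0 (last_st \<pi>) then 1 else (0::real)"
  have "?\<sigma> \<in> schedulers \<iota> P"
    unfolding schedulers_def is_distr_def using a0 by (auto split: if_splits)
  then show ?thesis by blast
qed

lemma mainB:
  "\<tau> \<noteq> [] \<Longrightarrow> bel \<in> est_MDP \<iota> P obs \<tau> \<Longrightarrow> \<exists>\<sigma>\<in>schedulers \<iota> P. bel = nrm (uvec \<iota> P obs \<sigma> \<tau>)"
proof (induction \<tau> arbitrary: bel rule: rev_induct)
  case (snoc z \<tau>)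
  show ?case
  proof (cases "\<tau> = []")
    case True
    obtain \<sigma> where "\<sigma> \<in> schedulers \<iota> P" using sched_ne by blast
    then show ?thesis using snoc.prems True by (auto simp: est_single nrm_base)
  next
    case False
    obtain b where b: "b \<in> est_MDP \<iota> P obs \<tau>" and bel: "bel \<in> est_up P obs b z"
      using snoc.prems est_snoc[OF False] by blast
    obtain \<sigma> where S: "\<sigma> \<in> schedulers \<iota> P" and bs: "b = nrm (uvec \<iota> P obs \<sigma> \<tau>)"
      using snoc.IH[OF False b] by blast
    obtain \<zeta> where v: "valid_sc P \<zeta>" and be: "bel = nrm (stp P obs \<zeta> z b)"
      using bel unfolding est_up_char by blast
    have be2: "bel = nrm (stp P obs \<zeta> z (uvec \<iota> P obs \<sigma> \<tau>))"
      unfolding be bs using uvec_nonneg[OF S] by (simp add: nrm_stp)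
    define n where "n = length \<tau> - 1"
    define \<sigma>' where "\<sigma>' \<pi> \<alpha> = (if length (snd \<pi>) = n then \<zeta> (last (fst \<pi>)) \<alpha> else \<sigma> \<pi> \<alpha>)" for \<pi> \<alpha>
    have S': "\<sigma>' \<in> schedulers \<iota> P"
      unfolding schedulers_def
    proof (intro CollectI allI impI)
      fix \<pi> assume p: "is_path \<iota> P \<pi>"
      show "is_distr (\<sigma>' \<pi>) \<and> (\<forall>\<alpha>. 0 < \<sigma>' \<pi> \<alpha> \<longrightarrow> \<alpha> \<in> AvAct P (last_st \<pi>))"
      proof (cases "length (snd \<pi>) = n")
        case True
        then show ?thesis using v unfolding valid_sc_def \<sigma>'_def last_st_def by simp
      next
        case False
        then show ?thesis using schedD[OF S p] unfolding \<sigma>'_def by (simp add: fun_eq_iff)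
      qed
    qed
    have agree: "\<forall>\<pi>. length (snd \<pi>) < n \<longrightarrow> \<sigma>' \<pi> = \<sigma> \<pi>"
      by (auto simp: \<sigma>'_def fun_eq_iff)
    have Weq: "Wt \<iota> P obs \<sigma>' \<tau> \<pi> = Wt \<iota> P obs \<sigma> \<tau> \<pi>" if "\<pi> \<in> Ln n" for \<pi>
      using Wt_cong[OF agree that] .
    have ueq: "uvec \<iota> P obs \<sigma>' \<tau> = uvec \<iota> P obs \<sigma> \<tau>"
      unfolding fun_eq_iff uvec_def n_def[symmetric] using Weq by (auto intro!: sum.cong)
    have Meq: "\<forall>s \<alpha>. Mv \<iota> P obs \<sigma>' \<tau> s \<alpha> = uvec \<iota> P obs \<sigma>' \<tau> s * \<zeta> s \<alpha>"
    proof (intro allI)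
      fix s \<alpha>
      have "Mv \<iota> P obs \<sigma>' \<tau> s \<alpha> = (\<Sum>\<pi>\<in>Ln n. (if last (fst \<pi>) = s then Wt \<iota> P obs \<sigma>' \<tau> \<pi> else 0) * \<zeta> s \<alpha>)"
        unfolding Mv_def n_def[symmetric] by (intro sum.cong refl) (auto simp: \<sigma>'_def Ln_def)
      then show "Mv \<iota> P obs \<sigma>' \<tau> s \<alpha> = uvec \<iota> P obs \<sigma>' \<tau> s * \<zeta> s \<alpha>"
        unfolding uvec_def n_def[symmetric] by (simp add: sum_distrib_right)
    qed
    have "uvec \<iota> P obs \<sigma>' (\<tau> @ [z]) = stp P obs \<zeta> z (uvec \<iota> P obs \<sigma> \<tau>)"
      using uvec_snoc_stp[OF False Meq] ueq by simp
    then show ?thesis using S' be2 by metis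
  qed
qed simp

lemma est_image:
  assumes "\<tau> \<noteq> []"
  shows "est_MDP \<iota> P obs \<tau> = (\<lambda>\<sigma>. nrm (uvec \<iota> P obs \<sigma> \<tau>)) ` schedulers \<iota> P"
  using mainA[OF _ assms] mainB[OF assms] by blast

end

theorem theorem1:
  fixes \<iota> :: "'s::finite \<Rightarrow> real"
    and P :: "'s \<Rightarrow> 'a::finite \<Rightarrow> ('s \<Rightarrow> real) option"
    and obs :: "'s \<Rightarrow> 'z::finite \<Rightarrow> real"
    and \<tau> :: "'z list"
    and r :: "'s \<Rightarrow> real"
  assumes "mdp \<iota> P obs"
    and "\<tau> \<noteq> []"
    and "\<forall>s. 0 \<le> r s"
  shows "risk \<iota> P obs r \<tau> = (SUP bel\<in>est_MDP \<iota> P obs \<tau>. \<Sum>s\<in>UNIV. bel s * r s)"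
proof -
  have "risk \<iota> P obs r \<tau> = (SUP \<sigma>\<in>schedulers \<iota> P. \<Sum>s\<in>UNIV. nrm (uvec \<iota> P obs \<sigma> \<tau>) s * r s)"
    unfolding risk_def using value_eq[OF assms(1) assms(2)] by simp
  also have "\<dots> = (SUP bel\<in>est_MDP \<iota> P obs \<tau>. \<Sum>s\<in>UNIV. bel s * r s)"
    unfolding est_image[OF assms(1) assms(2)] image_image by simp
  finally show ?thesis .
qed

end
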